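(* Let $W=W_{Y|X}$ be a BISO channel and $\eta=\eta_{KL}(W)$. Then for every $t\ge0$, $$1-h_2\Big(\tfrac{1-\sqrt\eta}{2}\ast h_2^{-1}\big(\max(1-t,0)\big)\Big)\le F_I(W,t)\le\eta\min\{t,1\}.$$
   Context: A binary-input symmetric-output (BISO) channel is a channel $P_{Y|X}$ with input alphabet $\{0,1\}$ and finite output alphabet $\mathcal Y=\{0,\pm1,\dots,\pm l\}$ for some integer $l\ge 1$ (some transition probabilities may be zero), such that $P_{Y|X}(y|0)=P_{Y|X}(-y|1)$ for all $y$. $\eta_{KL}(P)=\sup_{P_X,Q_X}\frac{D(P\circ P_X\|P\circ Q_X)}{D(P_X\|Q_X)}$ (over inputs with $0<D(P_X\|Q_X)<\infty$, $P\circ P_X$ the output distribution). Logarithms base 2; $h_2(p)=-p\log_2p-(1-p)\log_2(1-p)$, and $h_2^{-1}:[0,1]\to[0,\frac12]$ its inverse on $[0,\frac12]$. Binary convolution: $a\ast b=a(1-b)+(1-a)b$. The best possible data processing function is $F_I(W,t)=\sup\{I(U:Y):I(U:X)\le t,\ U-X-Y\}$, the supremum over all finite-alphabet $U$ and all joint distributions $P_{UX}$ (with $Y$ generated from $X$ by $W$). *)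

theory Defs
  imports Complex_Main
begin

text \<open>Binary input alphabet {0,1} (as naturals); output alphabet {-l,...,l} (as integers).
  A channel is W :: nat => int => real, with W x y = P(Y = y | X = x).\<close>

definition out_alph :: "nat \<Rightarrow> int set" where
  "out_alph l = {- int l .. int l}"

definition BISO :: "nat \<Rightarrow> (nat \<Rightarrow> int \<Rightarrow> real) \<Rightarrow> bool" where
  "BISO l W \<longleftrightarrow> l \<ge> 1
     \<and> (\<forall>x\<in>{0,1}. (\<forall>y\<in>out_alph l. W x y \<ge> 0) \<and> (\<Sum>y\<in>out_alph l. W x y) = 1)
     \<and> (\<forall>y\<in>out_alph l. W 0 y = W 1 (- y))"

definition is_dist :: "'a set \<Rightarrow> ('a \<Rightarrow> real) \<Rightarrow> bool" where
  "is_dist S P \<longleftrightarrow> (\<forall>x\<in>S. P x \<ge> 0) \<and> sum P S = 1"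

definition out_dist :: "(nat \<Rightarrow> int \<Rightarrow> real) \<Rightarrow> (nat \<Rightarrow> real) \<Rightarrow> int \<Rightarrow> real" where
  "out_dist W P y = (\<Sum>x\<in>{0::nat,1}. P x * W x y)"

text \<open>KL divergence (base 2) on a finite set S; the value is meaningful (finite)
  exactly when kl_finite holds (convention 0 log(0/q) = 0).\<close>
definition kl_finite :: "'a set \<Rightarrow> ('a \<Rightarrow> real) \<Rightarrow> ('a \<Rightarrow> real) \<Rightarrow> bool" where
  "kl_finite S P Q \<longleftrightarrow> (\<forall>y\<in>S. Q y = 0 \<longrightarrow> P y = 0)"

definition kl :: "'a set \<Rightarrow> ('a \<Rightarrow> real) \<Rightarrow> ('a \<Rightarrow> real) \<Rightarrow> real" where
  "kl S P Q = (\<Sum>y\<in>S. if P y = 0 then 0 else P y * log 2 (P y / Q y))"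

definition eta_KL :: "nat \<Rightarrow> (nat \<Rightarrow> int \<Rightarrow> real) \<Rightarrow> real" where
  "eta_KL l W = Sup {kl (out_alph l) (out_dist W P) (out_dist W Q) / kl {0,1} P Q | P Q.
       is_dist {0,1} P \<and> is_dist {0,1} Q \<and> kl_finite {0,1} P Q \<and> kl {0,1} P Q > 0}"

definition mut_info :: "'a set \<Rightarrow> 'b set \<Rightarrow> ('a \<Rightarrow> 'b \<Rightarrow> real) \<Rightarrow> real" where
  "mut_info A B J = (\<Sum>a\<in>A. \<Sum>b\<in>B. if J a b = 0 then 0
      else J a b * log 2 (J a b / ((\<Sum>b'\<in>B. J a b') * (\<Sum>a'\<in>A. J a' b))))"

text \<open>Best possible data processing function F_I(W,t). The finite alphabet of U
  is taken, without loss of generality, to be {0..<k} for some k.\<close>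
definition F_I :: "nat \<Rightarrow> (nat \<Rightarrow> int \<Rightarrow> real) \<Rightarrow> real \<Rightarrow> real" where
  "F_I l W t = Sup {mut_info {0..<k} (out_alph l) (\<lambda>u y. \<Sum>x\<in>{0::nat,1}. J u x * W x y) | (k::nat) (J::nat \<Rightarrow> nat \<Rightarrow> real).
       (\<forall>u\<in>{0..<k}. \<forall>x\<in>{0,1}. J u x \<ge> 0)
       \<and> (\<Sum>u\<in>{0..<k}. \<Sum>x\<in>{0::nat,1}. J u x) = 1
       \<and> mut_info {0..<k} {0,1} J \<le> t}"

definition h2 :: "real \<Rightarrow> real" where
  "h2 p = - (if p = 0 then 0 else p * log 2 p) - (if p = 1 then 0 else (1 - p) * log 2 (1 - p))"

definition h2_inv :: "real \<Rightarrow> real" where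
  "h2_inv v = (THE p. p \<in> {0..1/2} \<and> h2 p = v)"

definition bconv :: "real \<Rightarrow> real \<Rightarrow> real" where
  "bconv a b = a * (1 - b) + (1 - a) * b"

end

theory Submission
  imports Defs "HOL-Analysis.Analysis" "HOL-Real_Asymp.Real_Asymp"
begin

lemma xlnx_tendsto: "((\<lambda>x::real. x * ln x) \<longlongrightarrow> 0) (at_right 0)"
  by real_asymp
lemma cont_xlnx: "continuous_on {0..} (\<lambda>x::real. x * ln x)"
proof (clarsimp simp: continuous_on_eq_continuous_within)
  fix x :: real assume "0 \<le> x"
  show "continuous (at x within {0..}) (\<lambda>x. x * ln x)"
  proof (cases "x = 0")
    case True
    have "((\<lambda>x::real. x * ln x) \<longlongrightarrow> 0) (at 0 within {0..})"
      using xlnx_tendsto by (simp add: at_within_Ici_at_right)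
    then show ?thesis using True by (simp add: continuous_within)
  next
    case False
    then have "x > 0" using \<open>0 \<le> x\<close> by simp
    then show ?thesis
    proof -
      have "isCont (\<lambda>x::real. x * ln x) x"
        using \<open>x > 0\<close> by (auto intro!: continuous_intros)
      then show ?thesis by (rule continuous_at_imp_continuous_within)
    qed
  qed
qed


definition psi :: "real \<Rightarrow> real" where
  "psi s = ((1+s)*ln(1+s) + (1-s)*ln(1-s))/2"
definition dpsi :: "real \<Rightarrow> real" where
  "dpsi s = (ln(1+s) - ln(1-s))/2"

lemma psi_deriv: "-1 < s \<Longrightarrow> s < 1 \<Longrightarrow> (psi has_real_derivative dpsi s) (at s)"
  unfolding psi_def dpsi_def
  by (rule derivative_eq_intros refl | simp)+

lemma dpsi_deriv: "-1 < s \<Longrightarrow> s < 1 \<Longrightarrow> (dpsi has_real_derivative 1/(1-s^2)) (at s)"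
  unfolding dpsi_def
  by (rule derivative_eq_intros refl | simp)+ (simp add: field_simps power2_eq_square)

lemma psi_cont: "continuous_on {-1..1} psi"
proof -
  have c1: "continuous_on {-1..1} (\<lambda>s::real. (1+s)*ln(1+s))"
    by (rule continuous_on_compose2[OF cont_xlnx, of _ "\<lambda>s. 1+s"]) (auto intro!: continuous_intros)
  have c2: "continuous_on {-1..1} (\<lambda>s::real. (1-s)*ln(1-s))"
    by (rule continuous_on_compose2[OF cont_xlnx, of _ "\<lambda>s. 1-s"]) (auto intro!: continuous_intros)
  show ?thesis unfolding psi_def
    by (intro continuous_on_divide continuous_on_add c1 c2 continuous_on_const) auto
qed

lemma dpsi_convex: "convex_on {0..<1} dpsi"
proof (rule convex_on_realI[where f'="\<lambda>s. 1/(1-s^2)"])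
  show "connected {0..<(1::real)}" by simp
  show "\<And>x. x \<in> {0..<1} \<Longrightarrow> (dpsi has_real_derivative 1 / (1 - x\<^sup>2)) (at x)"
    by (rule dpsi_deriv) auto
  fix x y :: real assume "x \<in> {0..<1}" "y \<in> {0..<1}" "x \<le> y"
  then have "x^2 \<le> y^2" "y^2 < 1"
    by (auto intro: power_mono simp: abs_square_less_1)
  then show "1 / (1 - x\<^sup>2) \<le> 1 / (1 - y\<^sup>2)"
    by (intro divide_left_mono) auto
qed

lemma dpsi_0[simp]: "dpsi 0 = 0" by (simp add: dpsi_def)
lemma psi_0[simp]: "psi 0 = 0" by (simp add: psi_def)
lemma psi_1: "psi 1 = ln 2" by (simp add: psi_def)
lemma psi_even: "psi (-s) = psi s" by (simp add: psi_def algebra_simps)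

lemma dpsi_ratio:
  assumes "0 \<le> s" "s \<le> r" "r < 1" "0 < r"
  shows "r * dpsi s \<le> s * dpsi r"
proof -
  have "dpsi ((1 - s/r) *\<^sub>R 0 + (s/r) *\<^sub>R r) \<le> (1 - s/r) * dpsi 0 + (s/r) * dpsi r"
    by (rule convex_onD[OF dpsi_convex]) (use assms in auto)
  then have "dpsi s \<le> (s/r) * dpsi r" using assms by simp
  then show ?thesis using assms by (simp add: field_simps)
qed

lemma dpsi_nonneg: "0 \<le> s \<Longrightarrow> s < 1 \<Longrightarrow> 0 \<le> dpsi s"
  unfolding dpsi_def by simp

lemma dpsi_pos: "0 < s \<Longrightarrow> s < 1 \<Longrightarrow> 0 < dpsi s"
  unfolding dpsi_def by simp

lemma psi_mono: assumes "0 \<le> a" "a \<le> b" "b \<le> 1" shows "psi a \<le> psi b"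
proof (rule DERIV_nonneg_imp_increasing_open[OF assms(2)])
  fix x assume "a < x" "x < b"
  then show "\<exists>y. (psi has_real_derivative y) (at x) \<and> 0 \<le> y"
    using assms by (intro exI[of _ "dpsi x"]) (auto intro!: psi_deriv dpsi_nonneg)
next
  show "continuous_on {a..b} psi" by (rule continuous_on_subset[OF psi_cont]) (use assms in auto)
qed

lemma psi_strict_mono: assumes "0 \<le> a" "a < b" "b \<le> 1" shows "psi a < psi b"
proof (rule DERIV_pos_imp_increasing_open[OF assms(2)])
  fix x assume "a < x" "x < b"
  then show "\<exists>y. (psi has_real_derivative y) (at x) \<and> 0 < y"
    using assms by (intro exI[of _ "dpsi x"]) (auto intro!: psi_deriv dpsi_pos)
next
  show "continuous_on {a..b} psi" by (rule continuous_on_subset[OF psi_cont]) (use assms in auto)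
qed

lemma psi_nonneg: "0 \<le> s \<Longrightarrow> s \<le> 1 \<Longrightarrow> 0 \<le> psi s"
  using psi_mono[of 0 s] by simp

lemma psi_abs: "psi \<bar>s\<bar> = psi s"
  by (cases "s \<ge> 0") (auto simp: psi_even)



lemma psi_tangent:
  assumes r: "0 < r" "r < 1" and s: "0 \<le> s" "s \<le> 1"
  shows "psi r + (dpsi r / (2*r)) * (s^2 - r^2) \<le> psi s"
proof -
  define k where "k = dpsi r / (2*r)"
  define g where "g x = psi x - psi r - k*(x^2 - r^2)" for x
  have gr: "g r = 0" by (simp add: g_def)
  have gd: "(g has_real_derivative (dpsi x - 2*k*x)) (at x)" if "0 < x" "x < 1" for x
    unfolding g_def using that
    by (auto intro!: derivative_eq_intros psi_deriv)
  have gc: "continuous_on {a..b} g" if "0 \<le> a" "b \<le> 1" for a b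
    unfolding g_def
    by (intro continuous_intros continuous_on_subset[OF psi_cont]) (use that in auto)
  have kx: "2*k*x = x * dpsi r / r" for x using r by (simp add: k_def field_simps)
  show ?thesis
  proof (cases "s \<le> r")
    case True
    have "g s \<ge> g r"
    proof (rule DERIV_nonpos_imp_decreasing_open[OF True])
      fix x assume x: "s < x" "x < r"
      have "r * dpsi x \<le> x * dpsi r" using dpsi_ratio[of x r] x s r by auto
      then have "dpsi x \<le> x * dpsi r / r" using x r s by (simp add: field_simps)
      then have "dpsi x - 2*k*x \<le> 0" unfolding kx by simp
      then show "\<exists>y. (g has_real_derivative y) (at x) \<and> y \<le> 0"
        using gd[of x] x r s by auto
    qed (use gc s r in auto)
    then show ?thesis using gr by (simp add: g_def k_def)
  next
    case False
    have "g r \<le> g s"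
    proof (rule DERIV_nonneg_imp_increasing_open[of r s])
      fix x assume x: "r < x" "x < s"
      have "x * dpsi r \<le> r * dpsi x" using dpsi_ratio[of r x] x s r by auto
      then have "x * dpsi r / r \<le> dpsi x" using x r s by (simp add: field_simps)
      then have "dpsi x - 2*k*x \<ge> 0" unfolding kx by simp
      then show "\<exists>y. (g has_real_derivative y) (at x) \<and> y \<ge> 0"
        using gd[of x] x r s by auto
    qed (use gc s r False in auto)
    then show ?thesis using gr by (simp add: g_def k_def)
  qed
qed

definition phi :: "real \<Rightarrow> real" where "phi u = psi (sqrt u)"

lemma phi_tangent:
  assumes "0 < m" "m < 1" "0 \<le> v" "v \<le> 1"
  shows "phi m + (dpsi (sqrt m) / (2 * sqrt m)) * (v - m) \<le> phi v"
  using psi_tangent[of "sqrt m" "sqrt v"] assms by (simp add: phi_def)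

lemma phi_nonneg: "0 \<le> u \<Longrightarrow> u \<le> 1 \<Longrightarrow> 0 \<le> phi u"
  unfolding phi_def by (intro psi_nonneg) auto

lemma phi_mono: "0 \<le> a \<Longrightarrow> a \<le> b \<Longrightarrow> b \<le> 1 \<Longrightarrow> phi a \<le> phi b"
  unfolding phi_def by (intro psi_mono) auto

lemma phi_convex: "convex_on {0..1} phi"
proof (rule convex_onI)
  show "convex {0..(1::real)}" by simp
  fix t x y :: real assume t: "0 < t" "t < 1" and xy: "x \<in> {0..1}" "y \<in> {0..1}"
  define m where "m = (1-t)*x + t*y"
  have m01: "0 \<le> m" "m \<le> 1" using t xy unfolding m_def
    by (auto intro!: add_nonneg_nonneg mult_nonneg_nonneg convex_bound_le)
  consider "m = 0" | "m = 1" | "0 < m \<and> m < 1" using m01 by linarith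
  then show "phi ((1 - t) *\<^sub>R x + t *\<^sub>R y) \<le> (1 - t) * phi x + t * phi y"
  proof cases
    case 1
    have a: "(1-t)*x \<ge> 0" "t*y \<ge> 0" using t xy by auto
    then have "(1-t)*x = 0" "t*y = 0" using 1 unfolding m_def by linarith+
    then have "x = 0" "y = 0" using t by auto
    then show ?thesis by (simp add: phi_def)
  next
    case 2
    have "(1-t)*x \<le> 1-t" "t*y \<le> t" using t xy by (auto simp: mult_le_cancel_left1)
    then have "(1-t)*x = 1-t" "t*y = t" using 2 unfolding m_def by linarith+
    then have "x = 1" "y = 1" using t by auto
    then show ?thesis by (simp add: algebra_simps)
  next
    case 3
    define k where "k = dpsi (sqrt m) / (2 * sqrt m)"
    have "phi m + k*(x - m) \<le> phi x" "phi m + k*(y - m) \<le> phi y"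
      using phi_tangent 3 xy unfolding k_def by auto
    then have "(1-t)*(phi m + k*(x - m)) + t*(phi m + k*(y - m)) \<le> (1-t)*phi x + t*phi y"
      using t by (intro add_mono mult_left_mono) auto
    moreover have "(1-t)*(phi m + k*(x - m)) + t*(phi m + k*(y - m)) = phi m"
      unfolding m_def by (simp add: algebra_simps)
    ultimately show ?thesis by (simp add: m_def)
  qed
qed



definition kn :: "real \<Rightarrow> real \<Rightarrow> real" where
  "kn a b = a * ln (a/b) + (1-a) * ln ((1-a)/(1-b))"

definition kn2 :: "real \<Rightarrow> real \<Rightarrow> real" where
  "kn2 a b = a * (ln a - ln b) + (1-a) * (ln (1-a) - ln (1-b))"

lemma kn_kn2: "0 \<le> a \<Longrightarrow> a \<le> 1 \<Longrightarrow> 0 < b \<Longrightarrow> b < 1 \<Longrightarrow> kn a b = kn2 a b"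
  unfolding kn_def kn2_def
  by (cases "a = 0"; cases "a = 1") (auto simp: ln_div)

lemma kn_same[simp]: "kn a a = 0"
  unfolding kn_def by (cases "a = 0"; cases "a = 1") auto

lemma kn2_cont: "continuous_on {0..1} (\<lambda>a. kn2 a b)"
proof -
  have c1: "continuous_on {0..1} (\<lambda>a::real. a*ln a)"
    by (rule continuous_on_subset[OF cont_xlnx]) auto
  have c2: "continuous_on {0..1} (\<lambda>a::real. (1-a)*ln(1-a))"
    by (rule continuous_on_compose2[OF cont_xlnx, of _ "\<lambda>s. 1-s"]) (auto intro!: continuous_intros)
  have e: "kn2 a b = a*ln a + (1-a)*ln(1-a) - a * ln b - (1-a)*ln(1-b)" for a
    unfolding kn2_def by (simp add: algebra_simps)
  show ?thesis unfolding e
    by (intro continuous_on_diff continuous_on_add c1 c2 continuous_intros)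
qed

definition la :: "real \<Rightarrow> real" where "la z = ln z - ln (1-z)"

lemma la_deriv: "0 < z \<Longrightarrow> z < 1 \<Longrightarrow> (la has_real_derivative 1/(z*(1-z))) (at z)"
  unfolding la_def
  by (rule derivative_eq_intros refl | simp)+ (simp add: field_simps)

lemma kn2_deriv: "0 < a \<Longrightarrow> a < 1 \<Longrightarrow> ((\<lambda>a. kn2 a b) has_real_derivative (la a - la b)) (at a)"
  unfolding kn2_def la_def
  by (rule derivative_eq_intros refl | simp)+

lemma bsc_sdpi_half:
  assumes beta: "0 \<le> \<beta>" "\<beta> \<le> 1/2" and a: "0 \<le> a" "a \<le> 1" and b: "0 < b" "b < 1"
  shows "kn (\<beta> + (1-2*\<beta>)*a) (\<beta> + (1-2*\<beta>)*b) \<le> (1-2*\<beta>)^2 * kn a b"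
proof -
  define c where "c = 1 - 2*\<beta>"
  have c: "0 \<le> c" "c \<le> 1" using beta by (auto simp: c_def)
  define A where "A x = \<beta> + c*x" for x
  have A01: "0 < A x \<and> A x < 1" if "0 < x" "x < 1" for x
  proof -
    have cx: "0 \<le> c*x" using c that by simp
    have "0 < A x"
    proof (cases "\<beta> = 0")
      case True then show ?thesis using that by (simp add: A_def c_def)
    next
      case False then show ?thesis using beta cx by (simp add: A_def)
    qed
    moreover have "A x < 1"
    proof (cases "c = 0")
      case True then show ?thesis using beta by (simp add: A_def c_def)
    next
      case False then have "c*x < c" using that c by simp
      then show ?thesis using beta by (simp add: A_def c_def)
    qed
    ultimately show ?thesis by simp
  qed
  have A01c: "0 \<le> A x \<and> A x \<le> 1" if "0 \<le> x" "x \<le> 1" for x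
  proof -
    have "c*x \<le> c*1" using that c by (intro mult_left_mono) auto
    moreover have "0 \<le> c*x" using that c by simp
    ultimately have "c*x \<le> c" "0 \<le> c*x" by auto
    then show ?thesis using beta by (auto simp: A_def c_def)
  qed
  define H where "H x = la (A x) - c * la x" for x
  have Hd: "(H has_real_derivative (c/(A x*(1-A x)) - c/(x*(1-x)))) (at x)" if "0<x" "x<1" for x
  proof -
    have "((\<lambda>x. la (A x)) has_real_derivative (1/(A x*(1-A x)) * c)) (at x)"
      unfolding A_def
      by (rule DERIV_chain2[OF la_deriv]) (use A01[OF that] in \<open>auto simp: A_def intro!: derivative_eq_intros\<close>)
    then show ?thesis unfolding H_def
      by (auto intro!: derivative_eq_intros la_deriv that)
  qed
  have Hd_nonpos: "c/(A x*(1-A x)) - c/(x*(1-x)) \<le> 0" if "0<x" "x<1" for x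
  proof -
    have "A x*(1-A x) = 1/4 - c^2*(x-1/2)^2" by (simp add: A_def c_def power2_eq_square algebra_simps)
    moreover have "x*(1-x) = 1/4 - (x-1/2)^2" by (simp add: power2_eq_square algebra_simps)
    moreover have "c^2*(x-1/2)^2 \<le> (x-1/2)^2"
      using c by (intro mult_left_le_one_le) (auto simp: power_le_one)
    ultimately have "x*(1-x) \<le> A x*(1-A x)" by simp
    moreover have "0 < x*(1-x)" using that by simp
    ultimately have "1/(A x*(1-A x)) \<le> 1/(x*(1-x))" by (intro divide_left_mono) auto
    then have "c * (1/(A x*(1-A x))) \<le> c*(1/(x*(1-x)))" using c by (intro mult_left_mono) auto
    then show ?thesis by simp
  qed
  have Hmono: "H y \<le> H x" if "0 < x" "x \<le> y" "y < 1" for x y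
  proof (rule DERIV_nonpos_imp_decreasing_open[OF that(2)])
    fix z assume "x < z" "z < y"
    then show "\<exists>d. (H has_real_derivative d) (at z) \<and> d \<le> 0"
      using that Hd[of z] Hd_nonpos[of z] by (intro exI[of _ "c/(A z*(1-A z)) - c/(z*(1-z))"] conjI) auto
  next
    show "continuous_on {x..y} H"
      using that by (intro continuous_at_imp_continuous_on ballI DERIV_isCont[OF Hd]) auto
  qed
  define G where "G x = c^2 * kn2 x b - kn2 (A x) (A b)" for x
  have Ab: "0 < A b" "A b < 1" using A01 b by auto
  have Gd: "(G has_real_derivative (- c * (H x - H b))) (at x)" if "0<x" "x<1" for x
  proof -
    have "((\<lambda>x. kn2 (A x) (A b)) has_real_derivative ((la (A x) - la (A b)) * c)) (at x)"
      unfolding A_def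
      by (rule DERIV_chain2[OF kn2_deriv]) (use A01[OF that] in \<open>auto simp: A_def intro!: derivative_eq_intros\<close>)
    moreover have "((\<lambda>x. kn2 x b) has_real_derivative (la x - la b)) (at x)"
      by (rule kn2_deriv) (use that in auto)
    ultimately have "(G has_real_derivative (c^2 * (la x - la b) - (la (A x) - la (A b)) * c)) (at x)"
      unfolding G_def by (auto intro!: derivative_eq_intros)
    moreover have "c^2 * (la x - la b) - (la (A x) - la (A b)) * c = - c * (H x - H b)"
      by (simp add: H_def power2_eq_square algebra_simps)
    ultimately show ?thesis by simp
  qed
  have Gc: "continuous_on {0..1} G"
  proof -
    have "continuous_on {0..1} (\<lambda>x. kn2 (A x) (A b))"
      by (rule continuous_on_compose2[OF kn2_cont, of _ A])
        (use A01c in \<open>auto simp: A_def intro!: continuous_intros\<close>)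
    then show ?thesis unfolding G_def by (intro continuous_intros kn2_cont)
  qed
  have Gb: "G b = 0" by (simp add: G_def kn2_def)
  have "0 \<le> G a"
  proof (cases "a \<le> b")
    case True
    have "G b \<le> G a"
    proof (rule DERIV_nonpos_imp_decreasing_open[OF True])
      fix z assume z: "a < z" "z < b"
      have "H b \<le> H z" using Hmono[of z b] z a b by auto
      then have "- c * (H z - H b) \<le> 0" using c by (simp add: mult_nonneg_nonneg mult_nonneg_nonpos)
      then show "\<exists>d. (G has_real_derivative d) (at z) \<and> d \<le> 0"
        using Gd[of z] z a b by auto
    qed (rule continuous_on_subset[OF Gc], use a b in auto)
    then show ?thesis using Gb by simp
  next
    case False
    have "G b \<le> G a"
    proof (rule DERIV_nonneg_imp_increasing_open[of b a])
      fix z assume z: "b < z" "z < a"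
      have "H z \<le> H b" using Hmono[of b z] z a b by auto
      then have "- c * (H z - H b) \<ge> 0" using c by (simp add: mult_nonneg_nonneg mult_nonneg_nonpos)
      then show "\<exists>d. (G has_real_derivative d) (at z) \<and> d \<ge> 0"
        using Gd[of z] z a b by auto
    qed (use False in simp, rule continuous_on_subset[OF Gc], use a b in auto)
    then show ?thesis using Gb by simp
  qed
  moreover have "kn a b = kn2 a b" using a b by (rule kn_kn2)
  moreover have "kn (A a) (A b) = kn2 (A a) (A b)" using A01c[OF a] Ab by (intro kn_kn2) auto
  ultimately show ?thesis by (simp add: G_def A_def c_def)
qed



lemma kn_flip: "kn (1-a) (1-b) = kn a b"
  unfolding kn_def by simp

lemma bsc_sdpi:
  assumes a: "0 \<le> a" "a \<le> 1" and b: "0 \<le> b" "b \<le> 1" and beta: "0 \<le> \<beta>" "\<beta> \<le> 1"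
    and b0: "b = 0 \<Longrightarrow> a = 0" and b1: "b = 1 \<Longrightarrow> a = 1"
  shows "kn (a*(1-\<beta>)+(1-a)*\<beta>) (b*(1-\<beta>)+(1-b)*\<beta>) \<le> (1-2*\<beta>)^2 * kn a b"
proof (cases "a = b")
  case True then show ?thesis by simp
next
  case False
  then have bb: "0 < b" "b < 1" using b b0 b1 by (auto simp: less_le)
  show ?thesis
  proof (cases "\<beta> \<le> 1/2")
    case True
    have "kn (\<beta> + (1-2*\<beta>)*a) (\<beta> + (1-2*\<beta>)*b) \<le> (1-2*\<beta>)^2 * kn a b"
      by (rule bsc_sdpi_half) (use True beta a bb in auto)
    moreover have "a*(1-\<beta>)+(1-a)*\<beta> = \<beta> + (1-2*\<beta>)*a" "b*(1-\<beta>)+(1-b)*\<beta> = \<beta> + (1-2*\<beta>)*b"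
      by (simp_all add: algebra_simps)
    ultimately show ?thesis by simp
  next
    case False
    have "kn ((1-\<beta>) + (1-2*(1-\<beta>))*(1-a)) ((1-\<beta>) + (1-2*(1-\<beta>))*(1-b)) \<le> (1-2*(1-\<beta>))^2 * kn (1-a) (1-b)"
      by (rule bsc_sdpi_half) (use False beta a bb in auto)
    moreover have "(1-\<beta>) + (1-2*(1-\<beta>))*(1-a) = a*(1-\<beta>)+(1-a)*\<beta>"
        "(1-\<beta>) + (1-2*(1-\<beta>))*(1-b) = b*(1-\<beta>)+(1-b)*\<beta>"
        "(1-2*(1-\<beta>))^2 = (1-2*\<beta>)^2"
      by (simp_all add: algebra_simps power2_eq_square)
    ultimately show ?thesis by (simp add: kn_flip)
  qed
qed



lemma kl_simp: "kl S P Q = (\<Sum>y\<in>S. P y * log 2 (P y / Q y))"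
  unfolding kl_def by (intro sum.cong) auto

lemma log2_ln: "log 2 x = ln x / ln 2" by (simp add: log_def)

lemma kn_nonneg:
  assumes "0 \<le> a" "a \<le> 1" "0 \<le> b" "b \<le> 1" "b = 0 \<Longrightarrow> a = 0" "b = 1 \<Longrightarrow> a = 1"
  shows "0 \<le> kn a b"
proof -
  have t: "x - y \<le> x * ln (x/y)" if "0 \<le> x" "0 \<le> y" "y = 0 \<Longrightarrow> x = 0" for x y :: real
  proof (cases "x = 0")
    case True then show ?thesis using that by simp
  next
    case False
    then have xy: "0 < x" "0 < y" using that by force+
    have "ln (y/x) \<le> y/x - 1" using xy by (intro ln_le_minus_one) auto
    then have "x * ln (y/x) \<le> x * (y/x - 1)" using xy by (intro mult_left_mono) auto
    moreover have "ln (x/y) = - ln (y/x)" using xy by (simp add: ln_div)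
    moreover have "x * (y/x - 1) = y - x" using xy by (simp add: field_simps)
    ultimately have "x * ln (x/y) = - (x * ln (y/x))" "x * ln (y/x) \<le> y - x" by auto
    then show ?thesis by linarith
  qed
  have "a - b \<le> a * ln (a/b)" using assms by (intro t) auto
  moreover have "(1-a) - (1-b) \<le> (1-a) * ln ((1-a)/(1-b))" using assms by (intro t) auto
  ultimately show ?thesis unfolding kn_def by simp
qed

lemma kn_half: "0 \<le> z \<Longrightarrow> z \<le> 1 \<Longrightarrow> kn z (1/2) = psi (2*z - 1)"
  unfolding kn_def psi_def by (simp add: field_simps)

lemma kn_half_expand: "0 \<le> z \<Longrightarrow> z \<le> 1 \<Longrightarrow> kn z (1/2) = ln 2 + z * ln z + (1-z) * ln (1-z)"
proof -
  assume z: "0 \<le> z" "z \<le> 1"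
  have "kn z (1/2) = kn2 z (1/2)" using z by (intro kn_kn2) auto
  moreover have "ln (1/2::real) = - ln 2" by (simp add: ln_div)
  ultimately show ?thesis unfolding kn2_def by (simp add: algebra_simps)
qed

lemma h2_ln: "h2 z = - (z * ln z + (1-z) * ln (1-z)) / ln 2"
  unfolding h2_def log2_ln by (auto simp: field_simps)

lemma h2_kn: "0 \<le> z \<Longrightarrow> z \<le> 1 \<Longrightarrow> h2 z = 1 - kn z (1/2) / ln 2"
  unfolding h2_ln using kn_half_expand[of z]
  by (simp add: field_simps)

lemma h2_psi: "0 \<le> z \<Longrightarrow> z \<le> 1 \<Longrightarrow> h2 z = 1 - psi (1 - 2*z) / ln 2"
  using h2_kn[of z] kn_half[of z] psi_even[of "2*z-1"] by simp

lemma h2_strict: "0 \<le> x \<Longrightarrow> x < y \<Longrightarrow> y \<le> 1/2 \<Longrightarrow> h2 x < h2 y"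
proof -
  assume a: "0 \<le> x" "x < y" "y \<le> 1/2"
  have "psi (1 - 2*y) < psi (1 - 2*x)" using a by (intro psi_strict_mono) auto
  then show ?thesis using a by (simp add: h2_psi divide_strict_right_mono)
qed

lemma h2_inv:
  assumes "0 \<le> v" "v \<le> 1"
  shows "h2_inv v \<in> {0..1/2} \<and> h2 (h2_inv v) = v"
proof -
  have "\<exists>s. 0 \<le> s \<and> s \<le> 1 \<and> psi s = (1-v) * ln 2"
  proof (rule IVT')
    show "psi 0 \<le> (1-v) * ln 2" using assms by simp
    show "(1-v) * ln 2 \<le> psi 1" using assms by (simp add: psi_1)
    show "continuous_on {0..1} psi" by (rule continuous_on_subset[OF psi_cont]) auto
  qed simp
  then obtain s where s: "s \<in> {0..1}" "psi s = (1-v) * ln 2" by auto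
  define p where "p = (1-s)/2"
  have ps: "1 - 2*p = s" by (simp add: p_def field_simps)
  have p: "p \<in> {0..1/2}" using s by (auto simp: p_def)
  have "h2 p = 1 - psi s / ln 2" using p by (subst h2_psi) (auto simp: ps)
  then have p: "p \<in> {0..1/2}" "h2 p = v" using p s by auto
  have "h2_inv v = p" unfolding h2_inv_def
  proof (rule the_equality)
    show "p \<in> {0..1/2} \<and> h2 p = v" using p by simp
    fix x assume x: "x \<in> {0..1/2} \<and> h2 x = v"
    show "x = p"
    proof (rule ccontr)
      assume "x \<noteq> p"
      then consider "x < p" | "p < x" by linarith
      then show False using h2_strict x p by cases (auto dest: h2_strict)
    qed
  qed
  then show ?thesis using p by simp
qed



lemma sum01: "(\<Sum>x\<in>{0::nat,1}. f x) = f 0 + f 1" by simp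

lemma out_alph_split:
  "(\<Sum>y\<in>out_alph l. f y) = f 0 + (\<Sum>y\<in>{1..int l}. f y + f (-y))"
proof -
  have d: "out_alph l = insert 0 ({1..int l} \<union> uminus ` {1..int l})"
  proof (rule set_eqI)
    fix y :: int
    show "y \<in> out_alph l \<longleftrightarrow> y \<in> insert 0 ({1..int l} \<union> uminus ` {1..int l})"
    proof
      assume "y \<in> out_alph l"
      then have "-int l \<le> y" "y \<le> int l" by (auto simp: out_alph_def)
      moreover have "y < 0 \<Longrightarrow> y \<in> uminus ` {1..int l}"
        using calculation by (intro rev_image_eqI[of "-y"]) auto
      ultimately show "y \<in> insert 0 ({1..int l} \<union> uminus ` {1..int l})" by auto
    qed (auto simp: out_alph_def)
  qed
  have "sum f (out_alph l) = f 0 + sum f ({1..int l} \<union> uminus ` {1..int l})"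
    unfolding d by (subst sum.insert) auto
  also have "sum f ({1..int l} \<union> uminus ` {1..int l}) = sum f {1..int l} + sum f (uminus ` {1..int l})"
    by (rule sum.union_disjoint) auto
  also have "sum f (uminus ` {1..int l}) = (\<Sum>y\<in>{1..int l}. f (-y))"
    by (subst sum.reindex) (auto simp: inj_on_def)
  finally show ?thesis by (simp add: sum.distrib)
qed

lemma BISO_D:
  assumes "BISO l W"
  shows "l \<ge> 1" "\<And>y. y \<in> out_alph l \<Longrightarrow> W 0 y \<ge> 0" "\<And>y. y \<in> out_alph l \<Longrightarrow> W 1 y \<ge> 0"
    "(\<Sum>y\<in>out_alph l. W 0 y) = 1" "(\<Sum>y\<in>out_alph l. W 1 y) = 1"
    "\<And>y. y \<in> out_alph l \<Longrightarrow> W 1 y = W 0 (-y)"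
proof -
  show "l \<ge> 1" "\<And>y. y \<in> out_alph l \<Longrightarrow> W 0 y \<ge> 0" "\<And>y. y \<in> out_alph l \<Longrightarrow> W 1 y \<ge> 0"
    "(\<Sum>y\<in>out_alph l. W 0 y) = 1" "(\<Sum>y\<in>out_alph l. W 1 y) = 1"
    using assms unfolding BISO_def by auto
  fix y assume "y \<in> out_alph l"
  then have "-y \<in> out_alph l" by (auto simp: out_alph_def)
  then show "W 1 y = W 0 (-y)" using assms unfolding BISO_def by force
qed

lemma pos_in: "y \<in> {1..int l} \<Longrightarrow> y \<in> out_alph l \<and> -y \<in> out_alph l \<and> 0 \<in> out_alph l"
  by (auto simp: out_alph_def)

definition wy :: "(nat \<Rightarrow> int \<Rightarrow> real) \<Rightarrow> int \<Rightarrow> real" where "wy W y = W 0 y + W 0 (-y)"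
definition bt :: "(nat \<Rightarrow> int \<Rightarrow> real) \<Rightarrow> int \<Rightarrow> real" where "bt W y = W 0 (-y) / wy W y"
definition ey :: "(nat \<Rightarrow> int \<Rightarrow> real) \<Rightarrow> int \<Rightarrow> real" where "ey W y = (W 0 y - W 0 (-y))^2 / wy W y"
definition EE :: "nat \<Rightarrow> (nat \<Rightarrow> int \<Rightarrow> real) \<Rightarrow> real" where "EE l W = (\<Sum>y\<in>{1..int l}. ey W y)"
definition Ay :: "(nat \<Rightarrow> int \<Rightarrow> real) \<Rightarrow> int \<Rightarrow> real \<Rightarrow> real" where
  "Ay W y a = a * (1 - bt W y) + (1 - a) * bt W y"

lemma out_dist_eq: "out_dist W P y = P 0 * W 0 y + P 1 * W 1 y"
  by (simp add: out_dist_def)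

lemma kl_out_pair:
  assumes B: "BISO l W" and P: "P 1 = 1 - P 0" and Q: "Q 1 = 1 - Q 0"
  shows "kl (out_alph l) (out_dist W P) (out_dist W Q)
       = (\<Sum>y\<in>{1..int l}. wy W y * kn (Ay W y (P 0)) (Ay W y (Q 0))) / ln 2"
proof -
  note BD = BISO_D[OF B]
  let ?f = "\<lambda>y. out_dist W P y * log 2 (out_dist W P y / out_dist W Q y)"
  have t0: "?f 0 = 0"
  proof -
    have "W 1 0 = W 0 0" using BD(6)[of 0] by (simp add: out_alph_def)
    then have "out_dist W P 0 = W 0 0" "out_dist W Q 0 = W 0 0"
      using P Q by (simp_all add: out_dist_eq flip: distrib_right)
    then show ?thesis by (cases "W 0 0 = 0") auto
  qed
  have ty: "?f y + ?f (-y) = wy W y * kn (Ay W y (P 0)) (Ay W y (Q 0)) / ln 2"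
    if y: "y \<in> {1..int l}" for y
  proof -
    define u0 where "u0 = W 0 y"
    define u1 where "u1 = W 0 (-y)"
    have u: "0 \<le> u0" "0 \<le> u1" using BD(2) pos_in[OF y] by (auto simp: u0_def u1_def)
    have w1: "W 1 y = u1" "W 1 (-y) = u0" using BD(6) pos_in[OF y] by (auto simp: u0_def u1_def)
    define w where "w = u0 + u1"
    show ?thesis
    proof (cases "w = 0")
      case True
      then have "u0 = 0" "u1 = 0" using u by (auto simp: w_def)
      then show ?thesis using w1 by (simp add: out_dist_eq wy_def u0_def u1_def)
    next
      case False
      then have wpos: "w > 0" using u by (simp add: w_def)
      define \<beta> where "\<beta> = u1 / w"
      have b: "bt W y = \<beta>" "wy W y = w" by (simp_all add: bt_def wy_def \<beta>_def w_def u0_def u1_def)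
      have uu: "u1 = w * \<beta>" "u0 = w * (1 - \<beta>)" using wpos by (auto simp: \<beta>_def w_def field_simps)
      have od: "out_dist W R y = w * Ay W y (R 0)" "out_dist W R (-y) = w * (1 - Ay W y (R 0))"
        if "R 1 = 1 - R 0" for R
        unfolding out_dist_eq that Ay_def b w1 u0_def[symmetric] u1_def[symmetric] uu
        by (simp_all add: algebra_simps)
      have c: "(w * x) / (w * z) = x / z" for x z using wpos by simp
      show ?thesis
        unfolding od[OF P] od[OF Q] c b(2) kn_def log2_ln
        by (simp add: field_simps)
    qed
  qed
  have "kl (out_alph l) (out_dist W P) (out_dist W Q) = ?f 0 + (\<Sum>y\<in>{1..int l}. ?f y + ?f (-y))"
    unfolding kl_simp by (rule out_alph_split)
  also have "\<dots> = (\<Sum>y\<in>{1..int l}. wy W y * kn (Ay W y (P 0)) (Ay W y (Q 0)) / ln 2)"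
    using t0 ty by simp
  finally show ?thesis by (simp add: sum_divide_distrib)
qed

lemma kl_in_bin:
  fixes P Q :: "nat \<Rightarrow> real"
  assumes "P 1 = 1 - P 0" "Q 1 = 1 - Q 0"
  shows "kl {0,1} P Q = kn (P 0) (Q 0) / ln 2"
  unfolding kl_simp sum01 kn_def log2_ln using assms by (simp add: add_divide_distrib)



lemma dist01:
  fixes P :: "nat \<Rightarrow> real"
  assumes "is_dist {0,1} P" shows "P 1 = 1 - P 0" "0 \<le> P 0" "P 0 \<le> 1" "0 \<le> P 1"
  using assms unfolding is_dist_def by auto

lemma bt01: assumes B: "BISO l W" and y: "y \<in> {1..int l}" shows "0 \<le> bt W y" "bt W y \<le> 1"
proof -
  have u: "0 \<le> W 0 y" "0 \<le> W 0 (-y)" using BISO_D(2)[OF B] pos_in[OF y] by auto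
  then show "0 \<le> bt W y" by (simp add: bt_def wy_def)
  show "bt W y \<le> 1" using u
    by (cases "W 0 y + W 0 (-y) = 0") (auto simp: bt_def wy_def divide_le_eq_1)
qed

lemma Ay01: assumes B: "BISO l W" and y: "y \<in> {1..int l}" and a: "0 \<le> a" "a \<le> 1"
  shows "0 \<le> Ay W y a" "Ay W y a \<le> 1"
proof -
  have b: "0 \<le> bt W y" "bt W y \<le> 1" using bt01[OF B y] by auto
  show "0 \<le> Ay W y a" unfolding Ay_def using a b by simp
  have "a * (1 - bt W y) + (1 - a) * bt W y \<le> a * 1 + (1-a) * 1"
    using a b by (intro add_mono mult_left_mono) auto
  then show "Ay W y a \<le> 1" unfolding Ay_def by simp
qed

lemma ey_props: assumes B: "BISO l W" and y: "y \<in> {1..int l}"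
  shows "0 \<le> ey W y" "ey W y \<le> wy W y" "wy W y * (1 - 2 * bt W y)^2 = ey W y" "0 \<le> wy W y"
proof -
  define u0 where "u0 = W 0 y"
  define u1 where "u1 = W 0 (-y)"
  have u: "0 \<le> u0" "0 \<le> u1" using BISO_D(2)[OF B] pos_in[OF y] by (auto simp: u0_def u1_def)
  have e: "ey W y = (u0 - u1)^2 / (u0 + u1)" "wy W y = u0 + u1" "bt W y = u1 / (u0 + u1)"
    by (simp_all add: ey_def wy_def bt_def u0_def u1_def)
  show "0 \<le> ey W y" unfolding e using u by simp
  show "0 \<le> wy W y" unfolding e using u by simp
  show "ey W y \<le> wy W y"
  proof (cases "u0 + u1 = 0")
    case True then show ?thesis unfolding e by simp
  next
    case False
    then have pos: "0 < u0 + u1" using u by simp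
    have "(u0 - u1)^2 \<le> (u0 + u1)^2" using u by (simp add: power2_eq_square algebra_simps)
    then have "(u0 - u1)^2 \<le> (u0 + u1) * (u0 + u1)" by (simp add: power2_eq_square)
    then show ?thesis unfolding e using pos by (simp add: divide_le_eq)
  qed
  show "wy W y * (1 - 2 * bt W y)^2 = ey W y"
  proof (cases "u0 + u1 = 0")
    case True then show ?thesis unfolding e by simp
  next
    case False
    have h: "1 - 2*(u1/(u0+u1)) = (u0-u1)/(u0+u1)" using False by (simp add: field_simps)
    show ?thesis unfolding e h using False by (simp add: power2_eq_square)
  qed
qed

lemma sum_wy: assumes B: "BISO l W" shows "(\<Sum>y\<in>{1..int l}. wy W y) = 1 - W 0 0"
  using out_alph_split[of "W 0" l] BISO_D(4)[OF B] by (simp add: wy_def)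

lemma EE_bounds: assumes B: "BISO l W" shows "0 \<le> EE l W" "EE l W \<le> 1"
proof -
  show "0 \<le> EE l W" unfolding EE_def using ey_props[OF B] by (intro sum_nonneg) auto
  have "EE l W \<le> (\<Sum>y\<in>{1..int l}. wy W y)" unfolding EE_def using ey_props[OF B] by (intro sum_mono) auto
  moreover have "0 \<le> W 0 0" using BISO_D(2)[OF B, of 0] by (simp add: out_alph_def)
  ultimately show "EE l W \<le> 1" using sum_wy[OF B] by simp
qed

lemma kl_out_le_E:
  fixes P Q :: "nat \<Rightarrow> real"
  assumes B: "BISO l W" and P: "is_dist {0,1} P" and Q: "is_dist {0,1} Q" and F: "kl_finite {0,1} P Q"
  shows "kl (out_alph l) (out_dist W P) (out_dist W Q) \<le> EE l W * kl {0,1} P Q"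
proof -
  note p = dist01[OF P] and q = dist01[OF Q]
  have b0: "Q 0 = 0 \<Longrightarrow> P 0 = 0" using F by (simp add: kl_finite_def)
  have b1: "Q 0 = 1 \<Longrightarrow> P 0 = 1" using F q p by (auto simp: kl_finite_def)
  have "(\<Sum>y\<in>{1..int l}. wy W y * kn (Ay W y (P 0)) (Ay W y (Q 0)))
      \<le> (\<Sum>y\<in>{1..int l}. ey W y * kn (P 0) (Q 0))"
  proof (rule sum_mono)
    fix y assume y: "y \<in> {1..int l}"
    have "kn (Ay W y (P 0)) (Ay W y (Q 0)) \<le> (1 - 2 * bt W y)^2 * kn (P 0) (Q 0)"
      unfolding Ay_def using bt01[OF B y] p q b0 b1 by (intro bsc_sdpi) auto
    then have "wy W y * kn (Ay W y (P 0)) (Ay W y (Q 0)) \<le> wy W y * ((1 - 2 * bt W y)^2 * kn (P 0) (Q 0))"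
      using ey_props[OF B y] by (intro mult_left_mono) auto
    then show "wy W y * kn (Ay W y (P 0)) (Ay W y (Q 0)) \<le> ey W y * kn (P 0) (Q 0)"
      using ey_props(3)[OF B y] by (simp add: mult.assoc[symmetric])
  qed
  also have "\<dots> = EE l W * kn (P 0) (Q 0)" by (simp add: EE_def sum_distrib_right)
  finally show ?thesis
    unfolding kl_out_pair[OF B p(1) q(1)] kl_in_bin[OF p(1) q(1)]
    by (simp add: divide_right_mono)
qed

lemma kl_in_nonneg:
  fixes P Q :: "nat \<Rightarrow> real"
  assumes P: "is_dist {0,1} P" and Q: "is_dist {0,1} Q" and F: "kl_finite {0,1} P Q"
  shows "0 \<le> kl {0,1} P Q"
proof -
  note p = dist01[OF P] and q = dist01[OF Q]
  have b0: "Q 0 = 0 \<Longrightarrow> P 0 = 0" using F by (simp add: kl_finite_def)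
  have b1: "Q 0 = 1 \<Longrightarrow> P 0 = 1" using F q p by (auto simp: kl_finite_def)
  have "0 \<le> kn (P 0) (Q 0)" using p q b0 b1 by (intro kn_nonneg) auto
  then show ?thesis unfolding kl_in_bin[OF p(1) q(1)] by simp
qed



definition Rset :: "nat \<Rightarrow> (nat \<Rightarrow> int \<Rightarrow> real) \<Rightarrow> real set" where
  "Rset l W = {kl (out_alph l) (out_dist W P) (out_dist W Q) / kl {0,1} P Q | P Q.
       is_dist {0,1} P \<and> is_dist {0,1} Q \<and> kl_finite {0,1} P Q \<and> kl {0,1} P Q > 0}"

lemma eta_Rset: "eta_KL l W = Sup (Rset l W)"
  unfolding eta_KL_def Rset_def by simp

definition P1 :: "nat \<Rightarrow> real" where "P1 x = (if x = 0 then 1 else 0)"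
definition Qh :: "nat \<Rightarrow> real" where "Qh x = 1/2"

lemma P1Qh: "is_dist {0,1} P1" "is_dist {0,1} Qh" "kl_finite {0,1} P1 Qh" "kl {0,1} P1 Qh = 1"
proof -
  show "is_dist {0,1} P1" "is_dist {0,1} Qh" "kl_finite {0,1} P1 Qh"
    by (auto simp: is_dist_def P1_def Qh_def kl_finite_def)
  have "kl {0,1} P1 Qh = kn (P1 0) (Qh 0) / ln 2" by (rule kl_in_bin) (auto simp: P1_def Qh_def)
  then show "kl {0,1} P1 Qh = 1" by (simp add: P1_def Qh_def kn_def)
qed

lemma Rset_bdd: assumes B: "BISO l W" shows "\<forall>r\<in>Rset l W. r \<le> EE l W"
proof
  fix r assume "r \<in> Rset l W"
  then obtain P Q where PQ: "is_dist {0,1} P" "is_dist {0,1} Q" "kl_finite {0,1} P Q" "kl {0,1} P Q > 0"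
    and r: "r = kl (out_alph l) (out_dist W P) (out_dist W Q) / kl {0,1} P Q"
    unfolding Rset_def by blast
  have "kl (out_alph l) (out_dist W P) (out_dist W Q) \<le> EE l W * kl {0,1} P Q"
    by (rule kl_out_le_E[OF B PQ(1-3)])
  then show "r \<le> EE l W" unfolding r using PQ(4) by (simp add: pos_divide_le_eq)
qed

lemma Rset_mem: "is_dist {0,1} P \<Longrightarrow> is_dist {0,1} Q \<Longrightarrow> kl_finite {0,1} P Q \<Longrightarrow> kl {0,1} P Q > 0
  \<Longrightarrow> kl (out_alph l) (out_dist W P) (out_dist W Q) / kl {0,1} P Q \<in> Rset l W"
  unfolding Rset_def by blast

lemma eta_le_EE: assumes B: "BISO l W" shows "eta_KL l W \<le> EE l W"
  unfolding eta_Rset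
proof (rule cSup_least)
  show "Rset l W \<noteq> {}" using Rset_mem[OF P1Qh(1-3)] P1Qh(4) by auto
qed (use Rset_bdd[OF B] in auto)

lemma Rset_bdd_above: assumes B: "BISO l W" shows "bdd_above (Rset l W)"
  using Rset_bdd[OF B] by (auto simp: bdd_above_def)

lemma eta_nonneg: assumes B: "BISO l W" shows "0 \<le> eta_KL l W"
proof -
  have "kl (out_alph l) (out_dist W P1) (out_dist W Qh)
      = (\<Sum>y\<in>{1..int l}. wy W y * kn (Ay W y (P1 0)) (Ay W y (Qh 0))) / ln 2"
    by (rule kl_out_pair[OF B]) (auto simp: P1_def Qh_def)
  moreover have "0 \<le> (\<Sum>y\<in>{1..int l}. wy W y * kn (Ay W y (P1 0)) (Ay W y (Qh 0)))"
  proof (rule sum_nonneg)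
    fix y assume y: "y \<in> {1..int l}"
    have h: "Ay W y (Qh 0) = 1/2" by (simp add: Ay_def Qh_def field_simps)
    have "0 \<le> kn (Ay W y (P1 0)) (Ay W y (Qh 0))" unfolding h
      using Ay01[OF B y, of "P1 0"] by (intro kn_nonneg) (auto simp: P1_def)
    then show "0 \<le> wy W y * kn (Ay W y (P1 0)) (Ay W y (Qh 0))"
      using ey_props(4)[OF B y] by simp
  qed
  ultimately have "0 \<le> kl (out_alph l) (out_dist W P1) (out_dist W Qh) / kl {0,1} P1 Qh"
    using P1Qh(4) by simp
  also have "\<dots> \<le> eta_KL l W" unfolding eta_Rset
    by (rule cSup_upper[OF Rset_mem[OF P1Qh(1-3)] Rset_bdd_above[OF B]]) (use P1Qh(4) in simp)
  finally show ?thesis .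
qed

lemma sdpi:
  fixes P Q :: "nat \<Rightarrow> real"
  assumes B: "BISO l W" and P: "is_dist {0,1} P" and Q: "is_dist {0,1} Q" and F: "kl_finite {0,1} P Q"
  shows "kl (out_alph l) (out_dist W P) (out_dist W Q) \<le> eta_KL l W * kl {0,1} P Q"
proof (cases "kl {0,1} P Q > 0")
  case True
  have "kl (out_alph l) (out_dist W P) (out_dist W Q) / kl {0,1} P Q \<le> eta_KL l W" unfolding eta_Rset
    by (rule cSup_upper[OF Rset_mem[OF P Q F True] Rset_bdd_above[OF B]])
  then show ?thesis using True by (simp add: pos_divide_le_eq)
next
  case False
  then have z: "kl {0,1} P Q = 0" using kl_in_nonneg[OF P Q F] by simp
  show ?thesis using kl_out_le_E[OF B P Q F] unfolding z by simp
qed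



lemma MI:
  fixes J :: "'a \<Rightarrow> 'b \<Rightarrow> real"
  assumes fA: "finite A" and fB: "finite B" and nn: "\<And>a b. a \<in> A \<Longrightarrow> b \<in> B \<Longrightarrow> 0 \<le> J a b"
  shows "mut_info A B J = (\<Sum>a\<in>A. (\<Sum>b\<in>B. J a b) *
           kl B (\<lambda>b. J a b / (\<Sum>b'\<in>B. J a b')) (\<lambda>b. \<Sum>a'\<in>A. J a' b))"
  unfolding mut_info_def kl_simp
proof (rule sum.cong[OF refl])
  fix a assume a: "a \<in> A"
  define Ja where "Ja = (\<Sum>b\<in>B. J a b)"
  define M where "M b = (\<Sum>a'\<in>A. J a' b)" for b
  show "(\<Sum>b\<in>B. if J a b = 0 then 0 else J a b * log 2 (J a b / ((\<Sum>b'\<in>B. J a b') * (\<Sum>a'\<in>A. J a' b))))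
     = (\<Sum>b\<in>B. J a b) * (\<Sum>b\<in>B. J a b / (\<Sum>b'\<in>B. J a b') * log 2 (J a b / (\<Sum>b'\<in>B. J a b') / (\<Sum>a'\<in>A. J a' b)))"
    unfolding Ja_def[symmetric] M_def[symmetric]
  proof (cases "Ja = 0")
    case True
    then have "\<forall>b\<in>B. J a b = 0" using sum_nonneg_eq_0_iff[OF fB, of "J a"] nn a by (auto simp: Ja_def)
    then show "(\<Sum>b\<in>B. if J a b = 0 then 0 else J a b * log 2 (J a b / (Ja * M b)))
      = Ja * (\<Sum>b\<in>B. J a b / Ja * log 2 (J a b / Ja / M b))" using True by simp
  next
    case False
    show "(\<Sum>b\<in>B. if J a b = 0 then 0 else J a b * log 2 (J a b / (Ja * M b)))
      = Ja * (\<Sum>b\<in>B. J a b / Ja * log 2 (J a b / Ja / M b))"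
      unfolding sum_distrib_left
      by (rule sum.cong[OF refl]) (use False in auto)
  qed
qed



lemma UB:
  fixes J :: "nat \<Rightarrow> nat \<Rightarrow> real"
  assumes B: "BISO l W" and nn: "\<forall>u\<in>{0..<k}. \<forall>x\<in>{0,1}. J u x \<ge> 0"
    and s1: "(\<Sum>u\<in>{0..<k}. \<Sum>x\<in>{0::nat,1}. J u x) = 1"
  shows "mut_info {0..<k} (out_alph l) (\<lambda>u y. \<Sum>x\<in>{0::nat,1}. J u x * W x y)
         \<le> eta_KL l W * mut_info {0..<k} {0,1} J"
proof -
  note BD = BISO_D[OF B]
  define Ju where "Ju u = (\<Sum>x\<in>{0::nat,1}. J u x)" for u
  define PX where "PX x = (\<Sum>u\<in>{0..<k}. J u x)" for x
  define Pu where "Pu = (\<lambda>u x. J u x / Ju u)"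
  define JY where "JY u y = (\<Sum>x\<in>{0::nat,1}. J u x * W x y)" for u y
  have JYnn: "0 \<le> JY u y" if "u \<in> {0..<k}" "y \<in> out_alph l" for u y
    using nn that BD(2,3) by (auto simp: JY_def)
  have JYs: "(\<Sum>y\<in>out_alph l. JY u y) = Ju u" for u
  proof -
    have "(\<Sum>y\<in>out_alph l. JY u y) = (\<Sum>x\<in>{0::nat,1}. \<Sum>y\<in>out_alph l. J u x * W x y)"
      unfolding JY_def by (rule sum.swap)
    also have "\<dots> = (\<Sum>x\<in>{0::nat,1}. J u x * (\<Sum>y\<in>out_alph l. W x y))"
      by (simp add: sum_distrib_left)
    also have "\<dots> = Ju u" using BD(4,5) by (simp add: Ju_def)
    finally show ?thesis .
  qed
  have JYc: "(\<lambda>y. JY u y / Ju u) = out_dist W (Pu u)" for u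
    by (auto simp: JY_def out_dist_def Pu_def add_divide_distrib)
  have JYm: "(\<lambda>y. \<Sum>u\<in>{0..<k}. JY u y) = out_dist W PX"
    by (auto simp: JY_def out_dist_def PX_def sum.distrib sum_distrib_right)
  have eY: "mut_info {0..<k} (out_alph l) JY
      = (\<Sum>u\<in>{0..<k}. Ju u * kl (out_alph l) (out_dist W (Pu u)) (out_dist W PX))"
  proof -
    have "mut_info {0..<k} (out_alph l) JY = (\<Sum>u\<in>{0..<k}. (\<Sum>y\<in>out_alph l. JY u y) *
       kl (out_alph l) (\<lambda>y. JY u y / (\<Sum>y'\<in>out_alph l. JY u y')) (\<lambda>y. \<Sum>u'\<in>{0..<k}. JY u' y))"
      by (rule MI) (auto simp: JYnn out_alph_def)
    then show ?thesis by (simp only: JYs JYc JYm)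
  qed
  have eX: "mut_info {0..<k} {0,1} J = (\<Sum>u\<in>{0..<k}. Ju u * kl {0,1} (Pu u) PX)"
    unfolding Pu_def Ju_def PX_def by (rule MI) (use nn in auto)
  have PXd: "is_dist {0,1} PX"
    unfolding is_dist_def using nn s1
    by (auto simp: PX_def intro!: sum_nonneg) (simp add: sum.distrib)
  have "(\<Sum>u\<in>{0..<k}. Ju u * kl (out_alph l) (out_dist W (Pu u)) (out_dist W PX))
      \<le> (\<Sum>u\<in>{0..<k}. Ju u * (eta_KL l W * kl {0,1} (Pu u) PX))"
  proof (rule sum_mono)
    fix u assume u: "u \<in> {0..<k}"
    have Junn: "0 \<le> Ju u" using nn u by (auto simp: Ju_def)
    show "Ju u * kl (out_alph l) (out_dist W (Pu u)) (out_dist W PX) \<le> Ju u * (eta_KL l W * kl {0,1} (Pu u) PX)"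
    proof (cases "Ju u = 0")
      case True then show ?thesis by simp
    next
      case False
      then have Jp: "0 < Ju u" using Junn by simp
      have Pud: "is_dist {0,1} (Pu u)"
        unfolding is_dist_def using nn u Jp False
        by (auto simp: Pu_def Ju_def add_divide_distrib[symmetric])
      have F: "kl_finite {0,1} (Pu u) PX"
        unfolding kl_finite_def
      proof
        fix x :: nat assume x: "x \<in> {0,1}"
        show "PX x = 0 \<longrightarrow> Pu u x = 0"
        proof
          assume "PX x = 0"
          then have "(\<Sum>u'\<in>{0..<k}. J u' x) = 0" by (simp add: PX_def)
          moreover have "\<forall>u'\<in>{0..<k}. 0 \<le> J u' x" using nn x by blast
          ultimately have "\<forall>u'\<in>{0..<k}. J u' x = 0"
            using sum_nonneg_eq_0_iff[of "{0..<k}" "\<lambda>u'. J u' x"] by simp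
          then show "Pu u x = 0" using u by (simp add: Pu_def)
        qed
      qed
      show ?thesis using sdpi[OF B Pud PXd F] Jp by (intro mult_left_mono) auto
    qed
  qed
  also have "\<dots> = eta_KL l W * mut_info {0..<k} {0,1} J"
    unfolding eX by (simp add: sum_distrib_left algebra_simps)
  finally show ?thesis using eY unfolding JY_def by simp
qed

lemma IUX_le1:
  fixes J :: "nat \<Rightarrow> nat \<Rightarrow> real"
  assumes nn: "\<forall>u\<in>{0..<k}. \<forall>x\<in>{0,1}. J u x \<ge> 0"
    and s1: "(\<Sum>u\<in>{0..<k}. \<Sum>x\<in>{0::nat,1}. J u x) = 1"
  shows "mut_info {0..<k} {0,1} J \<le> 1"
proof -
  define Ju where "Ju u = (\<Sum>x\<in>{0::nat,1}. J u x)" for u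
  define PX where "PX x = (\<Sum>u\<in>{0..<k}. J u x)" for x
  have tm: "(if J u x = 0 then 0 else J u x * log 2 (J u x / (Ju u * PX x))) \<le> - (J u x * log 2 (PX x))"
    if u: "u \<in> {0..<k}" and x: "x \<in> {0,1}" for u x
  proof (cases "J u x = 0")
    case True then show ?thesis by simp
  next
    case False
    then have Jp: "0 < J u x" using nn u x by force
    have "J u x \<le> Ju u" unfolding Ju_def using nn u x
      by (intro member_le_sum) auto
    moreover have "J u x \<le> PX x" unfolding PX_def using nn u x
      by (intro member_le_sum) auto
    ultimately have pos: "0 < Ju u" "0 < PX x" "J u x / Ju u \<le> 1" using Jp by auto
    have "J u x / (Ju u * PX x) \<le> 1 / PX x"
      using pos Jp by (simp add: field_simps)
    then have "log 2 (J u x / (Ju u * PX x)) \<le> log 2 (1 / PX x)"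
      using pos Jp by (subst log_le_cancel_iff) auto
    also have "\<dots> = - log 2 (PX x)" using pos by (simp add: log_divide)
    finally have "J u x * log 2 (J u x / (Ju u * PX x)) \<le> J u x * (- log 2 (PX x))"
      using Jp by (intro mult_left_mono) auto
    then show ?thesis using False by simp
  qed
  have "mut_info {0..<k} {0,1} J \<le> (\<Sum>u\<in>{0..<k}. \<Sum>x\<in>{0,1}. - (J u x * log 2 (PX x)))"
    unfolding mut_info_def Ju_def[symmetric] PX_def[symmetric]
    using tm by (intro sum_mono) auto
  also have "\<dots> = - (PX 0 * log 2 (PX 0) + PX 1 * log 2 (PX 1))"
    by (simp add: PX_def sum.distrib sum_distrib_right sum_negf sum_subtractf)
  also have "\<dots> = h2 (PX 0)"
  proof -
    have "PX 1 = 1 - PX 0" using s1 by (simp add: PX_def sum.distrib)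
    then show ?thesis by (simp add: h2_ln log2_ln add_divide_distrib diff_divide_distrib)
  qed
  also have "\<dots> \<le> 1"
  proof -
    have p01: "0 \<le> PX 0" "PX 1 \<ge> 0" "PX 0 + PX 1 = 1" using nn s1
      by (auto simp: PX_def intro!: sum_nonneg) (simp add: sum.distrib)
    then have "0 \<le> kn (PX 0) (1/2)" by (intro kn_nonneg) auto
    then show ?thesis using p01 by (simp add: h2_kn)
  qed
  finally show ?thesis .
qed



lemma MIY:
  fixes J :: "nat \<Rightarrow> nat \<Rightarrow> real"
  assumes B: "BISO l W" and nn: "\<forall>u\<in>{0..<k}. \<forall>x\<in>{0,1}. J u x \<ge> 0"
  shows "mut_info {0..<k} (out_alph l) (\<lambda>u y. \<Sum>x\<in>{0::nat,1}. J u x * W x y)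
     = (\<Sum>u\<in>{0..<k}. (\<Sum>x\<in>{0::nat,1}. J u x) * kl (out_alph l)
          (out_dist W (\<lambda>x. J u x / (\<Sum>x\<in>{0::nat,1}. J u x))) (out_dist W (\<lambda>x. \<Sum>u\<in>{0..<k}. J u x)))"
proof -
  note BD = BISO_D[OF B]
  define Ju where "Ju u = (\<Sum>x\<in>{0::nat,1}. J u x)" for u
  define PX where "PX = (\<lambda>x. \<Sum>u\<in>{0..<k}. J u x)"
  define Pu where "Pu = (\<lambda>u x. J u x / Ju u)"
  define JY where "JY u y = (\<Sum>x\<in>{0::nat,1}. J u x * W x y)" for u y
  have JYnn: "0 \<le> JY u y" if "u \<in> {0..<k}" "y \<in> out_alph l" for u y
    using nn that BD(2,3) by (auto simp: JY_def)
  have JYs: "(\<Sum>y\<in>out_alph l. JY u y) = Ju u" for u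
  proof -
    have "(\<Sum>y\<in>out_alph l. JY u y) = (\<Sum>x\<in>{0::nat,1}. \<Sum>y\<in>out_alph l. J u x * W x y)"
      unfolding JY_def by (rule sum.swap)
    also have "\<dots> = (\<Sum>x\<in>{0::nat,1}. J u x * (\<Sum>y\<in>out_alph l. W x y))"
      by (simp add: sum_distrib_left)
    also have "\<dots> = Ju u" using BD(4,5) by (simp add: Ju_def)
    finally show ?thesis .
  qed
  have JYc: "(\<lambda>y. JY u y / Ju u) = out_dist W (Pu u)" for u
    by (auto simp: JY_def out_dist_def Pu_def add_divide_distrib)
  have JYm: "(\<lambda>y. \<Sum>u\<in>{0..<k}. JY u y) = out_dist W PX"
    by (auto simp: JY_def out_dist_def PX_def sum.distrib sum_distrib_right)
  have "mut_info {0..<k} (out_alph l) JY = (\<Sum>u\<in>{0..<k}. (\<Sum>y\<in>out_alph l. JY u y) *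
       kl (out_alph l) (\<lambda>y. JY u y / (\<Sum>y'\<in>out_alph l. JY u y')) (\<lambda>y. \<Sum>u'\<in>{0..<k}. JY u' y))"
    by (rule MI) (auto simp: JYnn out_alph_def)
  then have "mut_info {0..<k} (out_alph l) JY = (\<Sum>u\<in>{0..<k}. Ju u * kl (out_alph l) (out_dist W (Pu u)) (out_dist W PX))"
    by (simp only: JYs JYc JYm)
  then show ?thesis unfolding JY_def Pu_def PX_def Ju_def .
qed

lemma two: "{0..<2::nat} = {0,1}" by auto

lemma kn_Ay_half:
  assumes B: "BISO l W" and y: "y \<in> {1..int l}" and a: "0 \<le> a" "a \<le> 1"
  shows "kn (Ay W y a) (Ay W y (1/2)) = psi ((1 - 2 * bt W y) * (2*a - 1))"
proof -
  have h: "Ay W y (1/2) = 1/2" by (simp add: Ay_def field_simps)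
  have "kn (Ay W y a) (1/2) = psi (2 * Ay W y a - 1)"
    using Ay01[OF B y a] by (intro kn_half) auto
  moreover have "2 * Ay W y a - 1 = (1 - 2 * bt W y) * (2*a - 1)" by (simp add: Ay_def algebra_simps)
  ultimately show ?thesis unfolding h by simp
qed

lemma jensen_part:
  assumes B: "BISO l W" and q: "0 \<le> q" "q \<le> 1"
  shows "phi (q^2 * EE l W) \<le> (\<Sum>y\<in>{1..int l}. wy W y * psi ((1 - 2 * bt W y) * q))"
proof -
  define S where "S = insert (0::int) {1..int l}"
  define a where "a i = (if i = 0 then W 0 0 else wy W i)" for i
  define v where "v i = (if i = 0 then 0 else (1 - 2 * bt W i)^2 * q^2)" for i
  have W00: "0 \<le> W 0 0" using BISO_D(2)[OF B, of 0] by (simp add: out_alph_def)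
  have vi: "v i \<in> {0..1}" if "i \<in> S" for i
  proof (cases "i = 0")
    case True then show ?thesis by (simp add: v_def)
  next
    case False
    then have i: "i \<in> {1..int l}" using that by (simp add: S_def)
    have "\<bar>1 - 2 * bt W i\<bar> \<le> 1" using bt01[OF B i] by simp
    then have "(1 - 2 * bt W i)^2 \<le> 1" by (simp add: abs_square_le_1)
    moreover have "q^2 \<le> 1" using q by (simp add: abs_square_le_1)
    ultimately have "(1 - 2 * bt W i)^2 * q^2 \<le> 1 * 1" by (intro mult_mono) auto
    then show ?thesis using False by (simp add: v_def)
  qed
  have "phi (\<Sum>i\<in>S. a i *\<^sub>R v i) \<le> (\<Sum>i\<in>S. a i * phi (v i))"
  proof (rule convex_on_sum[OF _ _ phi_convex])
    show "finite S" "S \<noteq> {}" by (auto simp: S_def)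
    have "(\<Sum>i\<in>{1..int l}. a i) = (\<Sum>i\<in>{1..int l}. wy W i)"
      by (rule sum.cong) (auto simp: a_def)
    then show "(\<Sum>i\<in>S. a i) = 1" using sum_wy[OF B]
      by (simp add: S_def a_def)
    show "\<And>i. i \<in> S \<Longrightarrow> 0 \<le> a i" using W00 ey_props(4)[OF B] by (auto simp: S_def a_def)
    show "\<And>i. i \<in> S \<Longrightarrow> v i \<in> {0..1}" by (rule vi)
  qed
  moreover have "(\<Sum>i\<in>S. a i *\<^sub>R v i) = q^2 * EE l W"
  proof -
    have "(\<Sum>i\<in>S. a i *\<^sub>R v i) = (\<Sum>i\<in>{1..int l}. wy W i * ((1 - 2 * bt W i)^2 * q^2))"
      by (simp add: S_def v_def, rule sum.cong) (auto simp: a_def v_def)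
    also have "\<dots> = (\<Sum>i\<in>{1..int l}. q^2 * ey W i)"
      using ey_props(3)[OF B] by (intro sum.cong) (auto simp: mult.assoc[symmetric] mult.commute)
    finally show ?thesis by (simp add: EE_def sum_distrib_left)
  qed
  moreover have "(\<Sum>i\<in>S. a i * phi (v i)) = (\<Sum>y\<in>{1..int l}. wy W y * psi ((1 - 2 * bt W y) * q))"
  proof -
    have "(\<Sum>i\<in>S. a i * phi (v i)) = (\<Sum>i\<in>{1..int l}. wy W i * phi ((1 - 2 * bt W i)^2 * q^2))"
      by (simp add: S_def v_def phi_def, rule sum.cong) (auto simp: a_def v_def phi_def)
    also have "\<dots> = (\<Sum>y\<in>{1..int l}. wy W y * psi ((1 - 2 * bt W y) * q))"
    proof (rule sum.cong[OF refl])
      fix y assume y: "y \<in> {1..int l}"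
      have "sqrt ((1 - 2 * bt W y)^2 * q^2) = \<bar>(1 - 2 * bt W y) * q\<bar>"
        by (simp add: real_sqrt_mult abs_mult)
      then have "phi ((1 - 2 * bt W y)^2 * q^2) = psi ((1 - 2 * bt W y) * q)"
        by (simp add: phi_def psi_abs)
      then show "wy W y * phi ((1 - 2 * bt W y)^2 * q^2) = wy W y * psi ((1 - 2 * bt W y) * q)" by simp
    qed
    finally show ?thesis .
  qed
  ultimately show ?thesis by simp
qed



lemma F_elem_le:
  fixes J :: "nat \<Rightarrow> nat \<Rightarrow> real"
  assumes B: "BISO l W" and nn: "\<forall>u\<in>{0..<k}. \<forall>x\<in>{0,1}. J u x \<ge> 0"
    and s1: "(\<Sum>u\<in>{0..<k}. \<Sum>x\<in>{0::nat,1}. J u x) = 1" and it: "mut_info {0..<k} {0,1} J \<le> t"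
  shows "mut_info {0..<k} (out_alph l) (\<lambda>u y. \<Sum>x\<in>{0::nat,1}. J u x * W x y) \<le> eta_KL l W * min t 1"
proof -
  have "mut_info {0..<k} {0,1} J \<le> min t 1" using it IUX_le1[OF nn s1] by simp
  then have "eta_KL l W * mut_info {0..<k} {0,1} J \<le> eta_KL l W * min t 1"
    using eta_nonneg[OF B] by (intro mult_left_mono) auto
  then show ?thesis using UB[OF B nn s1] by linarith
qed

theorem mainTheorem12:
  fixes l :: nat and W :: "nat \<Rightarrow> int \<Rightarrow> real" and t :: real
  assumes "BISO l W" and "t \<ge> 0"
  shows "1 - h2 (bconv ((1 - sqrt (eta_KL l W)) / 2) (h2_inv (max (1 - t) 0))) \<le> F_I l W t
         \<and> F_I l W t \<le> eta_KL l W * min t 1"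
proof -
  note B = assms(1)
  define \<eta> where "\<eta> = eta_KL l W"
  have eta: "0 \<le> \<eta>" "\<eta> \<le> EE l W" "EE l W \<le> 1"
    using eta_nonneg[OF B] eta_le_EE[OF B] EE_bounds[OF B] by (auto simp: \<eta>_def)
  define v where "v = max (1 - t) 0"
  have v: "0 \<le> v" "v \<le> 1" using assms(2) by (auto simp: v_def)
  define p where "p = h2_inv v"
  have p: "0 \<le> p" "p \<le> 1/2" "h2 p = v" using h2_inv[OF v] by (auto simp: p_def)
  define q where "q = 1 - 2*p"
  have q: "0 \<le> q" "q \<le> 1" using p by (auto simp: q_def)
  define J0 where "J0 u x = (if x = u then (1-p)/2 else p/2)" for u x :: nat
  have J0nn: "\<forall>u\<in>{0..<2}. \<forall>x\<in>{0,1}. J0 u x \<ge> 0" using p by (auto simp: J0_def)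
  have J0s: "(\<Sum>u\<in>{0..<2}. \<Sum>x\<in>{0::nat,1}. J0 u x) = 1" unfolding two by (simp add: J0_def field_simps)
  define FS where "FS = {mut_info {0..<k} (out_alph l) (\<lambda>u y. \<Sum>x\<in>{0::nat,1}. J u x * W x y) | (k::nat) (J::nat \<Rightarrow> nat \<Rightarrow> real).
       (\<forall>u\<in>{0..<k}. \<forall>x\<in>{0,1}. J u x \<ge> 0)
       \<and> (\<Sum>u\<in>{0..<k}. \<Sum>x\<in>{0::nat,1}. J u x) = 1
       \<and> mut_info {0..<k} {0,1} J \<le> t}"
  have FI: "F_I l W t = Sup FS" unfolding F_I_def FS_def by simp
  have FS_le: "\<forall>r\<in>FS. r \<le> \<eta> * min t 1"
    unfolding FS_def \<eta>_def using F_elem_le[OF B] by blast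
  have FS_bdd: "bdd_above FS" using FS_le by (auto simp: bdd_above_def)
  define PX where "PX = (\<lambda>x. \<Sum>u\<in>{0..<2}. J0 u x)"
  define Pu where "Pu = (\<lambda>u x. J0 u x / (\<Sum>x\<in>{0::nat,1}. J0 u x))"
  have PX: "PX 0 = 1/2" "PX 1 = 1/2" by (simp_all add: PX_def two J0_def field_simps)
  have r0: "(\<Sum>x\<in>{0::nat,1}. J0 0 x) = 1/2" "(\<Sum>x\<in>{0::nat,1}. J0 1 x) = 1/2"
    by (simp_all add: J0_def field_simps)
  have Pu: "Pu 0 0 = 1-p" "Pu 0 1 = p" "Pu 1 0 = p" "Pu 1 1 = 1-p"
    by (simp_all only: Pu_def r0) (simp_all add: J0_def)
  have rows: "(\<Sum>x\<in>{0::nat,1}. J0 u x) = 1/2" if "u \<in> {0,1}" for u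
    using that by (auto simp: J0_def field_simps)
  have IUX: "mut_info {0..<2} {0,1} J0 = 1 - v"
  proof -
    have "mut_info {0..<2} {0,1} J0 = (\<Sum>u\<in>{0..<2}. (\<Sum>x\<in>{0::nat,1}. J0 u x) * kl {0,1} (Pu u) PX)"
      unfolding Pu_def PX_def by (rule MI) (use J0nn in auto)
    also have "\<dots> = (1/2) * kl {0,1} (Pu 0) PX + (1/2) * kl {0,1} (Pu 1) PX"
      unfolding two by (simp add: J0_def field_simps)
    also have "kl {0,1} (Pu 0) PX = kn (1-p) (1/2) / ln 2"
      using kl_in_bin[of "Pu 0" PX] Pu PX by simp
    also have "kl {0,1} (Pu 1) PX = kn p (1/2) / ln 2"
      using kl_in_bin[of "Pu 1" PX] Pu PX by simp
    also have "kn (1-p) (1/2) = kn p (1/2)" using kn_flip[of p "1/2"] by simp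
    finally have "mut_info {0..<2} {0,1} J0 = kn p (1/2) / ln 2" by simp
    also have "\<dots> = 1 - h2 p" using p by (simp add: h2_kn)
    finally show ?thesis using p by simp
  qed
  have IUXt: "mut_info {0..<2} {0,1} J0 \<le> t" unfolding IUX v_def using assms(2) by simp
  have mem: "mut_info {0..<2} (out_alph l) (\<lambda>u y. \<Sum>x\<in>{0::nat,1}. J0 u x * W x y) \<in> FS"
    unfolding FS_def using J0nn J0s IUXt by blast
  define Sy where "Sy = (\<Sum>y\<in>{1..int l}. wy W y * psi ((1 - 2 * bt W y) * q))"
  have klY: "kl (out_alph l) (out_dist W (Pu u)) (out_dist W PX) = Sy / ln 2"
    if u: "u \<in> {0,1}" for u
  proof -
    have pu: "Pu u 1 = 1 - Pu u 0" "0 \<le> Pu u 0" "Pu u 0 \<le> 1" using u Pu p by auto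
    have "kl (out_alph l) (out_dist W (Pu u)) (out_dist W PX)
        = (\<Sum>y\<in>{1..int l}. wy W y * kn (Ay W y (Pu u 0)) (Ay W y (PX 0))) / ln 2"
      by (rule kl_out_pair[OF B pu(1)]) (use PX in simp)
    also have "(\<Sum>y\<in>{1..int l}. wy W y * kn (Ay W y (Pu u 0)) (Ay W y (PX 0))) = Sy"
      unfolding Sy_def
    proof (rule sum.cong[OF refl])
      fix y assume y: "y \<in> {1..int l}"
      have "kn (Ay W y (Pu u 0)) (Ay W y (PX 0)) = psi ((1 - 2 * bt W y) * (2 * Pu u 0 - 1))"
        unfolding PX by (rule kn_Ay_half[OF B y pu(2,3)])
      also have "\<dots> = psi ((1 - 2 * bt W y) * q)"
      proof (cases "u = 0")
        case True then show ?thesis by (simp add: Pu q_def)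
      next
        case False
        then have "u = 1" using u by simp
        then have "(1 - 2 * bt W y) * (2 * Pu u 0 - 1) = - ((1 - 2 * bt W y) * q)"
          using Pu(3) by (simp add: q_def algebra_simps)
        then show ?thesis by (simp add: psi_even)
      qed
      finally show "wy W y * kn (Ay W y (Pu u 0)) (Ay W y (PX 0)) = wy W y * psi ((1 - 2 * bt W y) * q)"
        by simp
    qed
    finally show ?thesis .
  qed
  have IUY: "mut_info {0..<2} (out_alph l) (\<lambda>u y. \<Sum>x\<in>{0::nat,1}. J0 u x * W x y) = Sy / ln 2"
  proof -
    have "mut_info {0..<2} (out_alph l) (\<lambda>u y. \<Sum>x\<in>{0::nat,1}. J0 u x * W x y)
        = (\<Sum>u\<in>{0..<2}. (\<Sum>x\<in>{0::nat,1}. J0 u x) * kl (out_alph l) (out_dist W (Pu u)) (out_dist W PX))"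
      unfolding Pu_def PX_def by (rule MIY[OF B J0nn])
    also have "\<dots> = Sy / ln 2" unfolding two using klY[of 0] klY[of 1] by (simp add: J0_def field_simps)
    finally show ?thesis .
  qed
  define \<delta> where "\<delta> = (1 - sqrt \<eta>) / 2"
  have sq: "0 \<le> sqrt \<eta>" "sqrt \<eta> \<le> 1" using eta by auto
  define z where "z = bconv \<delta> p"
  have z01: "0 \<le> z" "z \<le> 1"
  proof -
    have d: "0 \<le> \<delta>" "\<delta> \<le> 1" unfolding \<delta>_def using sq by (auto simp del: real_sqrt_ge_0_iff real_sqrt_le_1_iff)
    show "0 \<le> z" unfolding z_def bconv_def using d p by simp
    have "\<delta> * (1 - p) + (1 - \<delta>) * p \<le> 1 * (1-p) + 1 * p"
      using d p by (intro add_mono mult_right_mono) auto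
    then show "z \<le> 1" unfolding z_def bconv_def by simp
  qed
  have z2: "1 - 2*z = sqrt \<eta> * q" by (simp add: z_def bconv_def \<delta>_def q_def field_simps)
  have lhs: "1 - h2 z = psi (sqrt \<eta> * q) / ln 2" using h2_psi[OF z01] z2 by simp
  have "psi (sqrt \<eta> * q) = phi (q^2 * \<eta>)"
    using q eta by (simp add: phi_def real_sqrt_mult mult.commute)
  also have "\<dots> \<le> phi (q^2 * EE l W)"
  proof (rule phi_mono)
    show "0 \<le> q^2 * \<eta>" using eta by simp
    show "q^2 * \<eta> \<le> q^2 * EE l W" using eta by (intro mult_left_mono) auto
    have "q^2 \<le> 1" using q by (simp add: abs_square_le_1)
    then show "q^2 * EE l W \<le> 1" using eta EE_bounds[OF B] by (intro mult_le_one) auto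
  qed
  also have "\<dots> \<le> Sy" unfolding Sy_def by (rule jensen_part[OF B q])
  finally have "1 - h2 z \<le> Sy / ln 2" unfolding lhs by (simp add: divide_right_mono)
  also have "\<dots> \<le> F_I l W t" unfolding FI IUY[symmetric] by (rule cSup_upper[OF mem FS_bdd])
  finally have low: "1 - h2 (bconv ((1 - sqrt (eta_KL l W)) / 2) (h2_inv (max (1 - t) 0))) \<le> F_I l W t"
    by (simp add: z_def \<delta>_def \<eta>_def p_def v_def)
  have up: "F_I l W t \<le> eta_KL l W * min t 1"
    unfolding FI using FS_le mem by (intro cSup_least) (auto simp: \<eta>_def)
  show ?thesis using low up by simp
qed


end
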